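(* Let $\mathcal A_{ML}$ be the MLMC estimator based on $\{X_\ell\}$ satisfying Assumption A with $\beta>\gamma$, and suppose $V_0>0$. Then the normalized MLMC estimator satisfies the extended CLT condition; in particular $\frac{\mathcal A_{ML}(\epsilon)-\mathbb E[X_{L(\epsilon)}]}{\sqrt{\mathrm{Var}(\mathcal A_{ML}(\epsilon))}}\xrightarrow{d}\mathcal N(0,1)$ as $\epsilon\downarrow0$.
   Context: Let $(\Omega,\mathcal F,\mathbb P)$ be a probability space, $X\in L^2(\Omega)$ a real random variable and $\{X_\ell\}_{\ell=-1}^\infty\subset L^2(\Omega)$ with $X_{-1}:=0$. Put $\Delta_\ell X:=X_\ell-X_{\ell-1}$, $V_\ell:=\mathrm{Var}(\Delta_\ell X)$, and let $C_\ell>0$ denote the (given) cost of sampling $\Delta_\ell X$. Assumption A: there are positive constants $\alpha,\beta,\gamma$ with $\min(\beta,\gamma)\le 2\alpha$, and $c_\alpha>0$, such that for all $\ell\in\mathbb N_0$: $|\mathbb E[X-X_\ell]|\le c_\alpha e^{-\alpha\ell}$; $V_\ell\le C e^{-\beta\ell}$ for some constant $C>0$; and $c e^{\gamma\ell}<C_\ell<C' e^{\gamma\ell}$ for constants $0<c<C'$. Define $S_k:=\sum_{\ell=0}^k\sqrt{V_\ell C_\ell}$. MLMC estimator: for $\epsilon>0$, $L(\epsilon):=\max(\lceil \log(c_\alpha\epsilon^{-1})/\alpha\rceil,1)$, $M_\ell(\epsilon):=\max\big(\lceil \epsilon^{-2}\sqrt{V_\ell/C_\ell}\,S_{L(\epsilon)}\rceil,1\big)$,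 and $\mathcal A_{ML}(\epsilon):=\sum_{\ell=0}^{L(\epsilon)}\frac{1}{M_\ell(\epsilon)}\sum_{i=1}^{M_\ell(\epsilon)}\Delta_\ell X^i$, where the family $\{\Delta_\ell X^i\}$ is mutually independent and each $\Delta_\ell X^i$ has the law of $\Delta_\ell X$. Conventions: $0\cdot(\pm\infty)=0$, $0/0=0$. Extended CLT condition: $\frac{\mathcal A_{ML}(\epsilon)-\mathbb E[X_{L(\epsilon)}]}{\sqrt{\mathrm{Var}(\mathcal A_{ML}(\epsilon))}}\xrightarrow{d}\mathcal N(0,1)$ as $\epsilon\downarrow0$, and $\lim_{\epsilon\downarrow0}\max_{0\le\ell\le L(\epsilon)}\frac{V_\ell}{M_\ell(\epsilon)^2\,\mathrm{Var}(\mathcal A_{ML}(\epsilon))}=0$. *)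

theory Defs
  imports "HOL-Probability.Probability"
begin

fun dX :: "(nat \<Rightarrow> 'a \<Rightarrow> real) \<Rightarrow> nat \<Rightarrow> 'a \<Rightarrow> real" where
  "dX Xs 0 = Xs 0"
| "dX Xs (Suc l) = (\<lambda>\<omega>. Xs (Suc l) \<omega> - Xs l \<omega>)"

definition Var :: "'a measure \<Rightarrow> ('a \<Rightarrow> real) \<Rightarrow> real" where
  "Var M f = (\<integral>\<omega>. (f \<omega> - (\<integral>\<eta>. f \<eta> \<partial>M))\<^sup>2 \<partial>M)"

definition Lev :: "real \<Rightarrow> real \<Rightarrow> real \<Rightarrow> nat" where
  "Lev c\<^sub>\<alpha> \<alpha> \<epsilon> = nat (max (\<lceil>ln (c\<^sub>\<alpha> / \<epsilon>) / \<alpha>\<rceil>) 1)"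

definition Ssum :: "(nat \<Rightarrow> real) \<Rightarrow> (nat \<Rightarrow> real) \<Rightarrow> nat \<Rightarrow> real" where
  "Ssum V Cost k = (\<Sum>l\<le>k. sqrt (V l * Cost l))"

definition Msz :: "(nat \<Rightarrow> real) \<Rightarrow> (nat \<Rightarrow> real) \<Rightarrow> real \<Rightarrow> real \<Rightarrow> real \<Rightarrow> nat \<Rightarrow> nat" where
  "Msz V Cost c\<^sub>\<alpha> \<alpha> \<epsilon> l =
     nat (max (\<lceil>\<epsilon> powi (-2) * sqrt (V l / Cost l) * Ssum V Cost (Lev c\<^sub>\<alpha> \<alpha> \<epsilon>)\<rceil>) 1)"

text \<open>MLMC estimator built from samples Y l i (i = 1..M_l) of the level differences.\<close>
definition AML :: "(nat \<Rightarrow> nat \<Rightarrow> 'a \<Rightarrow> real) \<Rightarrow> (nat \<Rightarrow> real) \<Rightarrow> (nat \<Rightarrow> real)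
    \<Rightarrow> real \<Rightarrow> real \<Rightarrow> real \<Rightarrow> 'a \<Rightarrow> real" where
  "AML Y V Cost c\<^sub>\<alpha> \<alpha> \<epsilon> \<omega> =
     (\<Sum>l\<le>Lev c\<^sub>\<alpha> \<alpha> \<epsilon>. (1 / real (Msz V Cost c\<^sub>\<alpha> \<alpha> \<epsilon> l)) *
        (\<Sum>i=1..Msz V Cost c\<^sub>\<alpha> \<alpha> \<epsilon> l. Y l i \<omega>))"

definition Phi :: "real \<Rightarrow> real" where
  "Phi x = measure (density lborel std_normal_density) {..x}"

end

theory Submission
  imports Defs
begin


lemma exp_neg_quad: fixes y::real assumes "y \<ge> 0" shows "\<bar>exp (- y) - (1 - y)\<bar> \<le> y^2/2"
proof -
  have l: "exp (-y) \<ge> 1 - y" using exp_ge_add_one_self[of "-y"] by simp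
  define f where "f z = 1 - z + z^2/2 - exp (-z)" for z::real
  have d: "(f has_real_derivative (-1 + z + exp (-z))) (at z)" for z
    unfolding f_def by (auto intro!: derivative_eq_intros simp: power2_eq_square)
  have "f 0 \<le> f y"
  proof (rule DERIV_nonneg_imp_nondecreasing[OF assms])
    fix x :: real assume "0 \<le> x"
    have "exp (-x) \<ge> 1 + (-x)" by (rule exp_ge_add_one_self)
    then show "\<exists>y. (f has_real_derivative y) (at x) \<and> 0 \<le> y" using d[of x] by (intro exI[of _ "-1 + x + exp (-x)"]) auto
  qed
  then have "exp (-y) \<le> 1 - y + y^2/2" by (simp add: f_def)
  with l show ?thesis by simp
qed

lemma (in prob_space) pair_indep:
  fixes U :: "'i \<Rightarrow> 'a \<Rightarrow> real"
  assumes "indep_vars (\<lambda>_. borel) U I" "j \<in> I" "k \<in> I" "j \<noteq> k"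
  shows "indep_var borel (U j) borel (U k)"
proof -
  have "indep_vars (\<lambda>_. borel) U (insert j {k})"
    using assms by (intro indep_vars_subset[OF assms(1)]) auto
  from indep_vars_sum[OF _ _ this] assms(4) have "indep_var borel (U j) borel (\<lambda>\<omega>. \<Sum>i\<in>{k}. U i \<omega>)" by auto
  then show ?thesis by simp
qed

lemma (in prob_space) var_sum_indep:
  fixes U :: "'i \<Rightarrow> 'a \<Rightarrow> real"
  assumes fin: "finite I" and ind: "indep_vars (\<lambda>_. borel) U I"
    and sq: "\<And>k. k \<in> I \<Longrightarrow> integrable M (\<lambda>x. (U k x)^2)"
    and m0: "\<And>k. k \<in> I \<Longrightarrow> expectation (U k) = 0"
  shows "expectation (\<lambda>x. (\<Sum>k\<in>I. U k x)^2) = (\<Sum>k\<in>I. expectation (\<lambda>x. (U k x)^2))"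
proof -
  have rv: "random_variable borel (U k)" if "k \<in> I" for k
    using ind that unfolding indep_vars_def2 by auto
  have int: "integrable M (U k)" if "k \<in> I" for k
    using square_integrable_imp_integrable[OF rv sq] that by auto
  have cross: "integrable M (\<lambda>x. U j x * U k x) \<and> expectation (\<lambda>x. U j x * U k x) = (if j = k then expectation (\<lambda>x. (U k x)^2) else 0)"
    if "j \<in> I" "k \<in> I" for j k
  proof (cases "j = k")
    case True then show ?thesis using sq[OF that(2)] by (simp add: power2_eq_square)
  next
    case False
    have iv: "indep_var borel (U j) borel (U k)" using pair_indep[OF ind that False] .
    show ?thesis using indep_var_lebesgue_integral[OF iv int int] indep_var_integrable[OF iv int int] that False m0
      by auto
  qed
  have "(\<lambda>x. (\<Sum>k\<in>I. U k x)^2) = (\<lambda>x. \<Sum>j\<in>I. \<Sum>k\<in>I. U j x * U k x)"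
    by (simp add: power2_eq_square sum_product)
  then have "expectation (\<lambda>x. (\<Sum>k\<in>I. U k x)^2) = (\<Sum>j\<in>I. \<Sum>k\<in>I. expectation (\<lambda>x. U j x * U k x))"
    using cross by (simp add: Bochner_Integration.integral_sum integrable_sum)
  also have "\<dots> = (\<Sum>j\<in>I. \<Sum>k\<in>I. (if j = k then expectation (\<lambda>x. (U k x)^2) else 0))"
    using cross by (intro sum.cong refl) auto
  also have "\<dots> = (\<Sum>k\<in>I. expectation (\<lambda>x. (U k x)^2))"
    using fin by simp
  finally show ?thesis .
qed


lemma (in prob_space) clt_triangular:
  fixes I :: "nat \<Rightarrow> 'i set" and Z :: "nat \<Rightarrow> 'i \<Rightarrow> 'a \<Rightarrow> real"
  assumes fin: "\<And>n. finite (I n)"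
    and ind: "\<And>n. indep_vars (\<lambda>_. borel) (Z n) (I n)"
    and sq: "\<And>n k. k \<in> I n \<Longrightarrow> integrable M (\<lambda>x. (Z n k x)^2)"
    and m0: "\<And>n k. k \<in> I n \<Longrightarrow> expectation (Z n k) = 0"
    and sumvar: "\<And>n. (\<Sum>k\<in>I n. expectation (\<lambda>x. (Z n k x)^2)) = 1"
    and lind: "\<And>t. (\<lambda>n. \<Sum>k\<in>I n. expectation (\<lambda>x. min (6 * (Z n k x)^2) (\<bar>t\<bar> * \<bar>Z n k x\<bar>^3))) \<longlonglongrightarrow> 0"
    and small: "(\<lambda>n. \<Sum>k\<in>I n. (expectation (\<lambda>x. (Z n k x)^2))^2) \<longlonglongrightarrow> 0"
  shows "weak_conv_m (\<lambda>n. distr M borel (\<lambda>x. \<Sum>k\<in>I n. Z n k x)) std_normal_distribution"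
proof (rule levy_continuity)
  have rv[measurable]: "random_variable borel (Z n k)" if "k \<in> I n" for n k
    using ind[of n] that unfolding indep_vars_def2 by auto
  have int: "integrable M (Z n k)" if "k \<in> I n" for n k
    using square_integrable_imp_integrable[OF rv sq] that by auto
  show "real_distribution (distr M borel (\<lambda>x. \<Sum>k\<in>I n. Z n k x))" for n
    by (rule real_distribution_distr) (use rv in auto)
  show "real_distribution std_normal_distribution" by (rule real_dist_normal_dist)
  fix t :: real
  define s where "s n k = expectation (\<lambda>x. (Z n k x)^2)" for n k
  have s0: "s n k \<ge> 0" for n k unfolding s_def by simp
  define b where "b n k = complex_of_real (exp (- (t^2 * s n k / 2)))" for n k
  have prodb: "(\<Prod>k\<in>I n. b n k) = complex_of_real (exp (- (t^2) / 2))" for n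
  proof -
    have "(\<Prod>k\<in>I n. b n k) = complex_of_real (\<Prod>k\<in>I n. exp (- (t^2 * s n k / 2)))"
      by (simp add: b_def)
    also have "(\<Prod>k\<in>I n. exp (- (t^2 * s n k / 2))) = exp (\<Sum>k\<in>I n. - (t^2 * s n k / 2))"
      by (simp add: exp_sum[OF fin])
    also have "(\<Sum>k\<in>I n. - (t^2 * s n k / 2)) = - (t^2 / 2) * (\<Sum>k\<in>I n. s n k)"
      by (simp add: sum_distrib_left sum_negf)
    also have "(\<Sum>k\<in>I n. s n k) = 1" using sumvar unfolding s_def by simp
    finally show ?thesis by simp
  qed
  have chareq: "char (distr M borel (\<lambda>x. \<Sum>k\<in>I n. Z n k x)) t = (\<Prod>k\<in>I n. char (distr M borel (Z n k)) t)" for n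
    by (rule char_distr_sum[OF ind])
  have approx: "cmod (char (distr M borel (Z n k)) t - b n k) \<le> t^2/6 * expectation (\<lambda>x. min (6 * (Z n k x)^2) (\<bar>t\<bar> * \<bar>Z n k x\<bar>^3)) + (t^2 * s n k)^2 / 8"
    if k: "k \<in> I n" for n k
  proof -
    have var: "variance (Z n k) = s n k" using m0[OF k] unfolding s_def by simp
    have a1: "cmod (char (distr M borel (Z n k)) t - (1 - t^2 * s n k / 2)) \<le> t^2/6 * expectation (\<lambda>x. min (6 * (Z n k x)^2) (\<bar>t\<bar> * \<bar>Z n k x\<bar>^3))"
      by (rule char_approx3'[OF rv[OF k] int[OF k] sq[OF k] m0[OF k] var]) simp
    have "\<bar>exp (- (t^2 * s n k / 2)) - (1 - t^2 * s n k / 2)\<bar> \<le> (t^2 * s n k / 2)^2/2"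
      by (rule exp_neg_quad) (use s0 in simp)
    then have a2: "cmod (complex_of_real (1 - t^2 * s n k / 2) - b n k) \<le> (t^2 * s n k)^2 / 8"
    proof -
      have "cmod (complex_of_real (1 - t^2 * s n k / 2) - b n k) = \<bar>exp (- (t^2 * s n k / 2)) - (1 - t^2 * s n k / 2)\<bar>"
        unfolding b_def by (metis norm_of_real of_real_diff abs_minus_commute)
      with \<open>\<bar>exp (- (t^2 * s n k / 2)) - (1 - t^2 * s n k / 2)\<bar> \<le> (t^2 * s n k / 2)^2/2\<close> show ?thesis
        by (simp add: power_divide)
    qed
    have "cmod (char (distr M borel (Z n k)) t - b n k) \<le> cmod (char (distr M borel (Z n k)) t - (1 - t^2 * s n k / 2)) + cmod (complex_of_real (1 - t^2 * s n k / 2) - b n k)"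
      by (rule norm_diff_triangle_le[OF order_refl order_refl])
    with a1 a2 show ?thesis by simp
  qed
  have bound: "cmod (char (distr M borel (\<lambda>x. \<Sum>k\<in>I n. Z n k x)) t - complex_of_real (exp (- (t^2) / 2)))
     \<le> t^2/6 * (\<Sum>k\<in>I n. expectation (\<lambda>x. min (6 * (Z n k x)^2) (\<bar>t\<bar> * \<bar>Z n k x\<bar>^3))) + t^4/8 * (\<Sum>k\<in>I n. (s n k)^2)" for n
  proof -
    have "cmod (char (distr M borel (\<lambda>x. \<Sum>k\<in>I n. Z n k x)) t - complex_of_real (exp (- (t^2) / 2)))
        = cmod ((\<Prod>k\<in>I n. char (distr M borel (Z n k)) t) - (\<Prod>k\<in>I n. b n k))"
      by (simp add: chareq prodb)
    also have "\<dots> \<le> (\<Sum>k\<in>I n. cmod (char (distr M borel (Z n k)) t - b n k))"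
    proof (rule norm_prod_diff)
      fix k assume "k \<in> I n"
      show "cmod (char (distr M borel (Z n k)) t) \<le> 1"
        by (rule real_distribution.cmod_char_le_1, rule real_distribution_distr) (use rv \<open>k \<in> I n\<close> in auto)
      show "cmod (b n k) \<le> 1" unfolding b_def using s0[of n k] by (simp add: norm_of_real)
    qed
    also have "\<dots> \<le> (\<Sum>k\<in>I n. t^2/6 * expectation (\<lambda>x. min (6 * (Z n k x)^2) (\<bar>t\<bar> * \<bar>Z n k x\<bar>^3)) + (t^2 * s n k)^2 / 8)"
      by (rule sum_mono) (rule approx)
    also have "\<dots> = t^2/6 * (\<Sum>k\<in>I n. expectation (\<lambda>x. min (6 * (Z n k x)^2) (\<bar>t\<bar> * \<bar>Z n k x\<bar>^3))) + t^4/8 * (\<Sum>k\<in>I n. (s n k)^2)"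
    proof -
      have "(\<Sum>k\<in>I n. t^2/6 * expectation (\<lambda>x. min (6 * (Z n k x)^2) (\<bar>t\<bar> * \<bar>Z n k x\<bar>^3)) + (t^2 * s n k)^2 / 8)
        = (\<Sum>k\<in>I n. t^2/6 * expectation (\<lambda>x. min (6 * (Z n k x)^2) (\<bar>t\<bar> * \<bar>Z n k x\<bar>^3)) + t^4/8 * (s n k)^2)"
        by (intro sum.cong refl) (simp add: power_mult_distrib flip: power_mult)
      then show ?thesis by (simp only: sum.distrib sum_distrib_left)
    qed
    finally show ?thesis .
  qed
  have lim0: "(\<lambda>n. t^2/6 * (\<Sum>k\<in>I n. expectation (\<lambda>x. min (6 * (Z n k x)^2) (\<bar>t\<bar> * \<bar>Z n k x\<bar>^3))) + t^4/8 * (\<Sum>k\<in>I n. (s n k)^2)) \<longlonglongrightarrow> 0"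
    unfolding s_def
    by (rule tendsto_add_zero[OF tendsto_mult_right_zero[OF lind] tendsto_mult_right_zero[OF small]])
  have "(\<lambda>n. char (distr M borel (\<lambda>x. \<Sum>k\<in>I n. Z n k x)) t - complex_of_real (exp (- (t^2) / 2))) \<longlonglongrightarrow> 0"
    by (rule Lim_null_comparison[OF _ lim0]) (use bound in auto)
  then have "(\<lambda>n. char (distr M borel (\<lambda>x. \<Sum>k\<in>I n. Z n k x)) t) \<longlonglongrightarrow> complex_of_real (exp (- (t^2) / 2))"
    by (simp add: LIM_zero_iff)
  then show "(\<lambda>n. char (distr M borel (\<lambda>x. \<Sum>k\<in>I n. Z n k x)) t) \<longlonglongrightarrow> char std_normal_distribution t"
    by (simp add: char_std_normal_distribution)
qed



lemma msz_bounds: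
  fixes q :: real assumes "q \<ge> 0"
  shows "1 \<le> real (nat (max \<lceil>q\<rceil> 1))" "q \<le> real (nat (max \<lceil>q\<rceil> 1))" "real (nat (max \<lceil>q\<rceil> 1)) \<le> q + 1"
proof -
  have "real (nat (max \<lceil>q\<rceil> 1)) = real_of_int (max \<lceil>q\<rceil> 1)" by simp
  then show "1 \<le> real (nat (max \<lceil>q\<rceil> 1))" "q \<le> real (nat (max \<lceil>q\<rceil> 1))" "real (nat (max \<lceil>q\<rceil> 1)) \<le> q + 1"
    using assms by (auto simp: max_def)
qed

lemma sq_diff_le: "\<bar>(a - b)^2\<bar> \<le> 2 * a^2 + 2 * (b::real)^2"
proof -
  have "(a-b)^2 + (a+b)^2 = 2*a^2+2*b^2" by (simp add: power2_eq_square algebra_simps)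
  moreover have "0 \<le> (a+b)^2" by simp
  ultimately have "(a-b)^2 \<le> 2*a^2+2*b^2" by linarith
  then show ?thesis by simp
qed

lemma min_le_convex:
  fixes u v p :: real assumes "0 \<le> p" "p \<le> 1"
  shows "min u v \<le> p * u + (1 - p) * v"
proof (cases "u \<le> v")
  case True
  have "0 \<le> (1 - p) * (v - u)" using assms True by simp
  then show ?thesis using True by (simp add: algebra_simps)
next
  case False
  have "0 \<le> p * (u - v)" using assms False by simp
  then show ?thesis using False by (simp add: algebra_simps)
qed

lemma min_scale:
  fixes d t c :: real assumes "c > 0"
  shows "min (6 * (d / c)^2) (\<bar>t\<bar> * \<bar>d / c\<bar>^3) = min (6 * d^2) ((\<bar>t\<bar> / c) * \<bar>d\<bar>^3) / c^2"
proof -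
  have h1: "6 * (d / c)^2 = (6 * d^2) / c^2" by (simp add: power_divide)
  have h2: "\<bar>t\<bar> * \<bar>d / c\<bar>^3 = ((\<bar>t\<bar> / c) * \<bar>d\<bar>^3) / c^2"
    using assms by (simp add: abs_divide power_divide eval_nat_numeral field_simps)
  have h3: "min (a / c^2) (b / c^2) = min a b / c^2" for a b :: real
  proof -
    have "a / c^2 \<le> b / c^2 \<longleftrightarrow> a \<le> b" using assms by (simp add: divide_le_cancel)
    then show ?thesis by (simp add: min_def)
  qed
  show ?thesis unfolding h1 h2 h3 by (rule refl)
qed

lemma dX_sum: "(\<Sum>l\<le>n. dX Xs l \<omega>) = Xs n \<omega>"
  by (induction n) auto

theorem theorem2:
  fixes M :: "'a measure"
    and X :: "'a \<Rightarrow> real"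
    and Xs :: "nat \<Rightarrow> 'a \<Rightarrow> real"
    and Y :: "nat \<Rightarrow> nat \<Rightarrow> 'a \<Rightarrow> real"
    and Cost :: "nat \<Rightarrow> real"
    and \<alpha> \<beta> \<gamma> c\<^sub>\<alpha> C c C' :: real
  defines "V \<equiv> (\<lambda>l. Var M (dX Xs l))"
  assumes P: "prob_space M"
    and X_L2: "X \<in> borel_measurable M" "integrable M (\<lambda>\<omega>. (X \<omega>)\<^sup>2)"
    and Xs_L2: "\<And>l. Xs l \<in> borel_measurable M" "\<And>l. integrable M (\<lambda>\<omega>. (Xs l \<omega>)\<^sup>2)"
    and Y_indep: "prob_space.indep_vars M (\<lambda>_. borel) (\<lambda>(l, i). Y l i) UNIV"
    and Y_law: "\<And>l i. distr M borel (Y l i) = distr M borel (dX Xs l)"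
    and pos: "\<alpha> > 0" "\<beta> > 0" "\<gamma> > 0" "c\<^sub>\<alpha> > 0" "C > 0" "c > 0" "c < C'"
    and min_le: "min \<beta> \<gamma> \<le> 2 * \<alpha>"
    and bias: "\<And>l. \<bar>(\<integral>\<omega>. (X \<omega> - Xs l \<omega>) \<partial>M)\<bar> \<le> c\<^sub>\<alpha> * exp (- \<alpha> * real l)"
    and var_decay: "\<And>l. V l \<le> C * exp (- \<beta> * real l)"
    and cost: "\<And>l. c * exp (\<gamma> * real l) < Cost l" "\<And>l. Cost l < C' * exp (\<gamma> * real l)"
    and beta_gt_gamma: "\<beta> > \<gamma>"
    and V0: "V 0 > 0"
  shows "(\<forall>x::real.
           ((\<lambda>\<epsilon>. measure M {\<omega> \<in> space M.
               (AML Y V Cost c\<^sub>\<alpha> \<alpha> \<epsilon> \<omega> - (\<integral>\<eta>. Xs (Lev c\<^sub>\<alpha> \<alpha> \<epsilon>) \<eta> \<partial>M))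
                 / sqrt (Var M (AML Y V Cost c\<^sub>\<alpha> \<alpha> \<epsilon>)) \<le> x})
             \<longlongrightarrow> Phi x) (at_right 0))
         \<and> ((\<lambda>\<epsilon>. Max ((\<lambda>l. V l / (real (Msz V Cost c\<^sub>\<alpha> \<alpha> \<epsilon> l) ^ 2
                      * Var M (AML Y V Cost c\<^sub>\<alpha> \<alpha> \<epsilon>))) ` {0..Lev c\<^sub>\<alpha> \<alpha> \<epsilon>}))
           \<longlongrightarrow> 0) (at_right 0)"
proof -
  interpret prob_space M by (rule P)
  have dX_meas[measurable]: "dX Xs l \<in> borel_measurable M" for l
    using Xs_L2(1) by (cases l) auto
  have dX_sq: "integrable M (\<lambda>\<omega>. (dX Xs l \<omega>)^2)" for l
  proof (cases l)
    case 0 then show ?thesis using Xs_L2(2) by simp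
  next
    case (Suc m)
    have "integrable M (\<lambda>\<omega>. 2 * (Xs (Suc m) \<omega>)^2 + 2 * (Xs m \<omega>)^2)"
      using Xs_L2(2) by auto
    then show ?thesis unfolding Suc
      by (rule Bochner_Integration.integrable_bound)
         (use Xs_L2(1) sq_diff_le in \<open>auto intro!: AE_I2\<close>)
  qed
  have dX_int: "integrable M (dX Xs l)" for l
    by (rule square_integrable_imp_integrable[OF dX_meas dX_sq])
  have Xs_int: "integrable M (Xs l)" for l
    by (rule square_integrable_imp_integrable[OF Xs_L2(1) Xs_L2(2)])
  define \<mu> where "\<mu> l = (\<integral>\<omega>. dX Xs l \<omega> \<partial>M)" for l
  have V_eq: "V l = expectation (\<lambda>\<omega>. (dX Xs l \<omega> - \<mu> l)^2)" for l
    unfolding V_def Var_def \<mu>_def by simp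
  have V_nn: "V l \<ge> 0" for l unfolding V_eq by simp
  have Y_meas[measurable]: "Y l i \<in> borel_measurable M" for l i
    using Y_indep unfolding indep_vars_def2 by auto
  have law_int: "(\<integral>\<omega>. f (Y l i \<omega>) \<partial>M) = (\<integral>\<omega>. f (dX Xs l \<omega>) \<partial>M)"
    if [measurable]: "f \<in> borel_measurable borel" for f :: "real \<Rightarrow> real" and l i
  proof -
    have "(\<integral>\<omega>. f (Y l i \<omega>) \<partial>M) = integral\<^sup>L (distr M borel (Y l i)) f"
      using integral_distr[of "Y l i" M borel f] that by simp
    also have "\<dots> = integral\<^sup>L (distr M borel (dX Xs l)) f" by (simp add: Y_law)
    also have "\<dots> = (\<integral>\<omega>. f (dX Xs l \<omega>) \<partial>M)"
      using integral_distr[of "dX Xs l" M borel f] that by simp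
    finally show ?thesis .
  qed
  have law_integrable: "integrable M (\<lambda>\<omega>. f (Y l i \<omega>)) \<longleftrightarrow> integrable M (\<lambda>\<omega>. f (dX Xs l \<omega>))"
    if [measurable]: "f \<in> borel_measurable borel" for f :: "real \<Rightarrow> real" and l i
  proof -
    have "integrable M (\<lambda>\<omega>. f (Y l i \<omega>)) \<longleftrightarrow> integrable (distr M borel (Y l i)) f"
      using integrable_distr_eq[of "Y l i" M borel f] that by simp
    also have "\<dots> \<longleftrightarrow> integrable (distr M borel (dX Xs l)) f" by (simp add: Y_law)
    also have "\<dots> \<longleftrightarrow> integrable M (\<lambda>\<omega>. f (dX Xs l \<omega>))"
      using integrable_distr_eq[of "dX Xs l" M borel f] that by simp
    finally show ?thesis .
  qed
  have Cost_pos: "Cost l > 0" for l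
    using cost(1)[of l] pos(6) by (smt (verit) exp_gt_zero mult_pos_pos)
  have cen_sq: "integrable M (\<lambda>\<omega>. (dX Xs l \<omega> - \<mu> l)^2)" for l
  proof -
    have "integrable M (\<lambda>\<omega>. 2 * (dX Xs l \<omega>)^2 + 2 * (\<mu> l)^2)" using dX_sq by auto
    then show ?thesis
      by (rule Bochner_Integration.integrable_bound) (use sq_diff_le in \<open>auto intro!: AE_I2\<close>)
  qed
  define L where "L \<epsilon> = Lev c\<^sub>\<alpha> \<alpha> \<epsilon>" for \<epsilon>
  define N where "N \<epsilon> l = Msz V Cost c\<^sub>\<alpha> \<alpha> \<epsilon> l" for \<epsilon> l
  define S where "S \<epsilon> = Ssum V Cost (L \<epsilon>)" for \<epsilon>
  define W where "W \<epsilon> = (\<Sum>l\<le>L \<epsilon>. V l / real (N \<epsilon> l))" for \<epsilon>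
  define J where "J \<epsilon> = Sigma {..L \<epsilon>} (\<lambda>l. {1..N \<epsilon> l})" for \<epsilon>
  define U where "U \<epsilon> = (\<lambda>(l,i) \<omega>. (Y l i \<omega> - \<mu> l) / real (N \<epsilon> l))" for \<epsilon>
  have N_ge1: "1 \<le> real (N \<epsilon> l)" for \<epsilon> l
    unfolding N_def Msz_def by linarith
  have J_fin: "finite (J \<epsilon>)" for \<epsilon> unfolding J_def by auto
  have AML_eq: "AML Y V Cost c\<^sub>\<alpha> \<alpha> \<epsilon> \<omega> = (\<Sum>(l,i)\<in>J \<epsilon>. Y l i \<omega> / real (N \<epsilon> l))" for \<epsilon> \<omega>
  proof -
    have "AML Y V Cost c\<^sub>\<alpha> \<alpha> \<epsilon> \<omega> = (\<Sum>l\<le>L \<epsilon>. \<Sum>i\<in>{1..N \<epsilon> l}. Y l i \<omega> / real (N \<epsilon> l))"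
      by (simp add: AML_def L_def N_def sum_distrib_left)
    also have "\<dots> = (\<Sum>(l,i)\<in>J \<epsilon>. Y l i \<omega> / real (N \<epsilon> l))"
      unfolding J_def by (rule sum.Sigma) auto
    finally show ?thesis .
  qed
  have mean_decomp: "(\<integral>\<omega>. Xs (L \<epsilon>) \<omega> \<partial>M) = (\<Sum>l\<le>L \<epsilon>. \<mu> l)" for \<epsilon>
  proof -
    have "(\<integral>\<omega>. Xs (L \<epsilon>) \<omega> \<partial>M) = (\<integral>\<omega>. (\<Sum>l\<le>L \<epsilon>. dX Xs l \<omega>) \<partial>M)" by (simp add: dX_sum)
    also have "\<dots> = (\<Sum>l\<le>L \<epsilon>. \<mu> l)" unfolding \<mu>_def by (subst Bochner_Integration.integral_sum) (use dX_int in auto)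
    finally show ?thesis .
  qed
  have sumJ: "(\<Sum>(l,i)\<in>J \<epsilon>. f l) = (\<Sum>l\<le>L \<epsilon>. real (N \<epsilon> l) * f l)" for \<epsilon> and f :: "nat \<Rightarrow> real"
  proof -
    have "(\<Sum>(l,i)\<in>J \<epsilon>. f l) = (\<Sum>l\<le>L \<epsilon>. \<Sum>i\<in>{1..N \<epsilon> l}. f l)"
      unfolding J_def by (rule sum.Sigma[symmetric]) auto
    then show ?thesis by simp
  qed
  have cen_eq: "AML Y V Cost c\<^sub>\<alpha> \<alpha> \<epsilon> \<omega> = (\<Sum>k\<in>J \<epsilon>. U \<epsilon> k \<omega>) + (\<Sum>l\<le>L \<epsilon>. \<mu> l)" for \<epsilon> \<omega>
  proof -
    have "(\<Sum>k\<in>J \<epsilon>. U \<epsilon> k \<omega>) = (\<Sum>(l,i)\<in>J \<epsilon>. Y l i \<omega> / real (N \<epsilon> l) - \<mu> l / real (N \<epsilon> l))"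
      unfolding U_def by (intro sum.cong refl) (auto simp: diff_divide_distrib)
    also have "\<dots> = (\<Sum>(l,i)\<in>J \<epsilon>. Y l i \<omega> / real (N \<epsilon> l)) - (\<Sum>(l,i)\<in>J \<epsilon>. \<mu> l / real (N \<epsilon> l))"
      by (simp add: sum_subtractf case_prod_beta)
    also have "(\<Sum>(l,i)\<in>J \<epsilon>. \<mu> l / real (N \<epsilon> l)) = (\<Sum>l\<le>L \<epsilon>. \<mu> l)"
    proof -
      have "N \<epsilon> l \<noteq> 0" for l using N_ge1[of \<epsilon> l] by auto
      then show ?thesis by (simp add: sumJ)
    qed
    finally show ?thesis by (simp add: AML_eq)
  qed
  have U_meas[measurable]: "U \<epsilon> k \<in> borel_measurable M" for \<epsilon> k
    unfolding U_def by (cases k) simp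
  have U_sq: "integrable M (\<lambda>\<omega>. (U \<epsilon> k \<omega>)^2)" for \<epsilon> k
  proof (cases k)
    case (Pair l i)
    have "integrable M (\<lambda>\<omega>. ((dX Xs l \<omega> - \<mu> l) / real (N \<epsilon> l))^2)"
      using cen_sq[of l] by (simp add: power_divide)
    then show ?thesis unfolding Pair U_def prod.case
      by (subst law_integrable[of "\<lambda>x. ((x - \<mu> l) / real (N \<epsilon> l))^2"]) auto
  qed
  have U_int: "integrable M (U \<epsilon> k)" for \<epsilon> k
    by (rule square_integrable_imp_integrable[OF U_meas U_sq])
  have U_mean: "expectation (U \<epsilon> k) = 0" for \<epsilon> k
  proof (cases k)
    case (Pair l i)
    have "expectation (U \<epsilon> k) = (\<integral>\<omega>. (dX Xs l \<omega> - \<mu> l) / real (N \<epsilon> l) \<partial>M)"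
      unfolding Pair U_def prod.case by (subst law_int[of "\<lambda>x. (x - \<mu> l) / real (N \<epsilon> l)"]) auto
    also have "\<dots> = 0" using dX_int[of l] by (simp add: \<mu>_def prob_space)
    finally show ?thesis .
  qed
  have U_var: "expectation (\<lambda>\<omega>. (U \<epsilon> k \<omega>)^2) = V (fst k) / (real (N \<epsilon> (fst k)))^2" for \<epsilon> k
  proof (cases k)
    case (Pair l i)
    have "expectation (\<lambda>\<omega>. (U \<epsilon> k \<omega>)^2) = (\<integral>\<omega>. ((dX Xs l \<omega> - \<mu> l) / real (N \<epsilon> l))^2 \<partial>M)"
      unfolding Pair U_def prod.case by (subst law_int[of "\<lambda>x. ((x - \<mu> l) / real (N \<epsilon> l))^2"]) auto
    also have "\<dots> = V l / (real (N \<epsilon> l))^2" by (simp add: V_eq power_divide)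
    finally show ?thesis by (simp add: Pair)
  qed
  have U_indep: "indep_vars (\<lambda>_. borel) (U \<epsilon>) (J \<epsilon>)" for \<epsilon>
  proof -
    have "indep_vars (\<lambda>_. borel) (\<lambda>k \<omega>. (\<lambda>x. (x - \<mu> (fst k)) / real (N \<epsilon> (fst k))) ((\<lambda>(l, i). Y l i) k \<omega>)) UNIV"
      by (rule indep_vars_compose2[OF Y_indep]) auto
    also have "(\<lambda>k \<omega>. (\<lambda>x. (x - \<mu> (fst k)) / real (N \<epsilon> (fst k))) ((\<lambda>(l, i). Y l i) k \<omega>)) = U \<epsilon>"
      by (auto simp: U_def fun_eq_iff)
    finally show ?thesis by (rule indep_vars_subset) auto
  qed
  have W_pos: "W \<epsilon> > 0" for \<epsilon>
  proof -
    have "V 0 / real (N \<epsilon> 0) \<le> W \<epsilon>" unfolding W_def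
      by (rule member_le_sum[where i=0 and f="\<lambda>l. V l / real (N \<epsilon> l)"]) (use V_nn in auto)
    moreover have "V 0 / real (N \<epsilon> 0) > 0" using V0 N_ge1[of \<epsilon> 0] by simp
    ultimately show ?thesis by linarith
  qed
  have Var_eq: "Var M (AML Y V Cost c\<^sub>\<alpha> \<alpha> \<epsilon>) = W \<epsilon>" for \<epsilon>
  proof -
    have i1: "integrable M (\<lambda>\<omega>. \<Sum>k\<in>J \<epsilon>. U \<epsilon> k \<omega>)" using U_int by auto
    have e1: "(\<integral>\<omega>. (\<Sum>k\<in>J \<epsilon>. U \<epsilon> k \<omega>) \<partial>M) = 0"
      by (subst Bochner_Integration.integral_sum) (use U_int U_mean in auto)
    have AE: "AML Y V Cost c\<^sub>\<alpha> \<alpha> \<epsilon> = (\<lambda>\<omega>. (\<Sum>k\<in>J \<epsilon>. U \<epsilon> k \<omega>) + (\<Sum>l\<le>L \<epsilon>. \<mu> l))"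
      by (rule ext) (rule cen_eq)
    have E: "expectation (AML Y V Cost c\<^sub>\<alpha> \<alpha> \<epsilon>) = (\<Sum>l\<le>L \<epsilon>. \<mu> l)"
      unfolding AE using i1 e1 by (simp add: prob_space)
    have "Var M (AML Y V Cost c\<^sub>\<alpha> \<alpha> \<epsilon>) = expectation (\<lambda>\<omega>. (\<Sum>k\<in>J \<epsilon>. U \<epsilon> k \<omega>)^2)"
      unfolding Var_def E by (simp add: cen_eq)
    also have "\<dots> = (\<Sum>k\<in>J \<epsilon>. expectation (\<lambda>\<omega>. (U \<epsilon> k \<omega>)^2))"
      by (rule var_sum_indep[OF J_fin U_indep U_sq U_mean])
    also have "\<dots> = (\<Sum>(l,i)\<in>J \<epsilon>. V l / (real (N \<epsilon> l))^2)"
      by (intro sum.cong refl) (auto simp: U_var)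
    also have "\<dots> = W \<epsilon>" unfolding sumJ W_def
      by (intro sum.cong refl) (simp add: power2_eq_square)
    finally show ?thesis .
  qed
  have Cp: "C' > 0" using pos by linarith
  define \<delta> where "\<delta> = (\<beta> - \<gamma>) / 2"
  have \<delta>_pos: "\<delta> > 0" unfolding \<delta>_def using beta_gt_gamma by simp
  define K1 where "K1 = sqrt (C * C')"
  have K1_pos: "K1 > 0" unfolding K1_def using pos Cp by simp
  define bnd where "bnd l = K1 * exp (- \<delta> * real l)" for l :: nat
  have bnd_nn: "bnd l \<ge> 0" for l unfolding bnd_def using K1_pos by simp
  have sqrtVC: "sqrt (V l * Cost l) \<le> bnd l" for l
  proof -
    have "V l * Cost l \<le> (C * exp (- \<beta> * real l)) * (C' * exp (\<gamma> * real l))"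
      by (rule mult_mono) (use var_decay cost(2)[of l] Cost_pos[of l] V_nn[of l] pos in \<open>auto intro: less_imp_le\<close>)
    also have "\<dots> = (bnd l)^2"
    proof -
      have "(bnd l)^2 = K1^2 * exp (- \<delta> * real l) * exp (- \<delta> * real l)"
        by (simp add: bnd_def power2_eq_square)
      also have "\<dots> = C * C' * exp (- \<delta> * real l + - \<delta> * real l)"
        unfolding K1_def using pos Cp by (simp add: exp_add[symmetric])
      also have "- \<delta> * real l + - \<delta> * real l = - \<beta> * real l + \<gamma> * real l"
        unfolding \<delta>_def by (simp add: field_simps)
      also have "C * C' * exp (- \<beta> * real l + \<gamma> * real l) = (C * exp (- \<beta> * real l)) * (C' * exp (\<gamma> * real l))"
        by (simp only: exp_add mult_ac)
      finally show ?thesis ..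
    qed
    finally show ?thesis
      using bnd_nn[of l] real_sqrt_le_mono by fastforce
  qed
  have bnd_summable: "summable bnd"
  proof -
    have eq: "bnd = (\<lambda>l. K1 * exp (- \<delta>) ^ l)"
      unfolding bnd_def by (rule ext) (simp add: exp_of_nat_mult[symmetric] mult.commute)
    show ?thesis unfolding eq
      by (rule summable_mult, rule summable_geometric) (use \<delta>_pos in simp)
  qed
  define Sb where "Sb = suminf bnd"
  define s0 where "s0 = sqrt (V 0 * Cost 0)"
  have s0_pos: "s0 > 0" unfolding s0_def using V0 Cost_pos[of 0] by simp
  have VC_nn: "0 \<le> V l * Cost l" for l using V_nn[of l] Cost_pos[of l] by simp
  have S_lb: "s0 \<le> S \<epsilon>" for \<epsilon>
    unfolding S_def Ssum_def s0_def
    by (rule member_le_sum[where i=0 and f="\<lambda>l. sqrt (V l * Cost l)"]) (simp_all add: VC_nn)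
  have S_ub: "S \<epsilon> \<le> Sb" for \<epsilon>
  proof -
    have "S \<epsilon> \<le> (\<Sum>l\<le>L \<epsilon>. bnd l)" unfolding S_def Ssum_def by (rule sum_mono) (rule sqrtVC)
    also have "\<dots> \<le> Sb" unfolding Sb_def by (rule sum_le_suminf[OF bnd_summable]) (use bnd_nn in auto)
    finally show ?thesis .
  qed
  have N_eq: "N \<epsilon> l = nat (max \<lceil>(1 / \<epsilon>^2) * sqrt (V l / Cost l) * S \<epsilon>\<rceil> 1)" for \<epsilon> l
    unfolding N_def Msz_def S_def L_def by (simp add: power_int_minus divide_inverse)
  have q_nn: "0 \<le> (1 / \<epsilon>^2) * sqrt (V l / Cost l) * S \<epsilon>" for \<epsilon> l
    using V_nn[of l] Cost_pos[of l] S_lb[of \<epsilon>] s0_pos by simp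
  have N_lb: "(1 / \<epsilon>^2) * sqrt (V l / Cost l) * S \<epsilon> \<le> real (N \<epsilon> l)" for \<epsilon> l
    unfolding N_eq by (rule msz_bounds(2)[OF q_nn])
  have N_ub: "real (N \<epsilon> l) \<le> (1 / \<epsilon>^2) * sqrt (V l / Cost l) * S \<epsilon> + 1" for \<epsilon> l
    unfolding N_eq by (rule msz_bounds(3)[OF q_nn])
  define A where "A = sqrt (V 0 / Cost 0) * Sb"
  have Sb_pos: "Sb > 0" using S_lb[of 0] S_ub[of 0] s0_pos by linarith
  have A_pos: "A > 0" unfolding A_def using V0 Cost_pos[of 0] Sb_pos by simp
  define k where "k = V 0 / (A + 1)"
  have k_pos: "k > 0" unfolding k_def using V0 A_pos by simp
  have W_lb: "k * \<epsilon>^2 \<le> W \<epsilon>" if e: "0 < \<epsilon>" "\<epsilon> \<le> 1" for \<epsilon>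
  proof -
    have e2: "\<epsilon>^2 \<le> 1" "\<epsilon>^2 > 0" using e by (auto simp: power_le_one)
    have "1 \<le> 1 / \<epsilon>^2" using e2 by simp
    have "(1 / \<epsilon>^2) * sqrt (V 0 / Cost 0) * S \<epsilon> \<le> (1 / \<epsilon>^2) * A"
      unfolding A_def mult.assoc using S_ub[of \<epsilon>] e2 V_nn[of 0] Cost_pos[of 0]
      by (intro mult_left_mono) (auto intro!: mult_left_mono)
    then have "real (N \<epsilon> 0) \<le> (A + 1) / \<epsilon>^2"
      using N_ub[of \<epsilon> 0] \<open>1 \<le> 1 / \<epsilon>^2\<close> by (simp add: add_divide_distrib)
    then have "V 0 / ((A + 1) / \<epsilon>^2) \<le> V 0 / real (N \<epsilon> 0)"
      using V0 N_ge1[of \<epsilon> 0] A_pos e2 by (intro divide_left_mono) auto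
    also have "\<dots> \<le> W \<epsilon>" unfolding W_def
      by (rule member_le_sum[where i=0 and f="\<lambda>l. V l / real (N \<epsilon> l)"]) (use V_nn in auto)
    finally show ?thesis unfolding k_def by (simp add: field_simps)
  qed
  have VN_lb: "V l / real (N \<epsilon> l) \<le> \<epsilon>^2 * sqrt (V l * Cost l) / s0" if e: "0 < \<epsilon>" for \<epsilon> l
  proof (cases "V l = 0")
    case True then show ?thesis by simp
  next
    case False
    then have Vp: "V l > 0" using V_nn[of l] by simp
    have qpos: "0 < (1 / \<epsilon>^2) * sqrt (V l / Cost l) * S \<epsilon>"
      using Vp Cost_pos[of l] S_lb[of \<epsilon>] s0_pos e by simp
    have "V l / real (N \<epsilon> l) \<le> V l / ((1 / \<epsilon>^2) * sqrt (V l / Cost l) * S \<epsilon>)"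
    proof (rule divide_left_mono[OF N_lb])
      show "0 < real (N \<epsilon> l) * ((1 / \<epsilon>^2) * sqrt (V l / Cost l) * S \<epsilon>)"
        using qpos N_ge1[of \<epsilon> l] by (rule_tac mult_pos_pos) linarith+
    qed (use Vp in auto)
    also have "\<dots> = \<epsilon>^2 * sqrt (V l * Cost l) / S \<epsilon>"
    proof -
      have "V l / sqrt (V l / Cost l) = sqrt (V l * Cost l)"
        using Vp Cost_pos[of l]
        by (simp add: real_sqrt_divide real_sqrt_mult field_simps)
      moreover have "sqrt (V l / Cost l) > 0" "S \<epsilon> > 0" using Vp Cost_pos[of l] S_lb[of \<epsilon>] s0_pos by auto
      moreover have "V l / ((1 / \<epsilon>^2) * sqrt (V l / Cost l) * S \<epsilon>) = \<epsilon>^2 * (V l / sqrt (V l / Cost l)) / S \<epsilon>"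
        using e calculation(2,3) by (simp add: field_simps)
      ultimately show ?thesis by simp
    qed
    also have "\<dots> \<le> \<epsilon>^2 * sqrt (V l * Cost l) / s0"
    proof (rule divide_left_mono[OF S_lb])
      show "0 \<le> \<epsilon>^2 * sqrt (V l * Cost l)" using VC_nn[of l] by simp
      show "0 < S \<epsilon> * s0" using S_lb[of \<epsilon>] s0_pos by (simp add: mult_pos_pos)
    qed
    finally show ?thesis .
  qed
  have ratio1: "V l / (real (N \<epsilon> l) * W \<epsilon>) \<le> bnd l / (s0 * k)" if e: "0 < \<epsilon>" "\<epsilon> \<le> 1" for \<epsilon> l
  proof -
    have "V l / (real (N \<epsilon> l) * W \<epsilon>) = (V l / real (N \<epsilon> l)) / W \<epsilon>" by simp
    also have "\<dots> \<le> (\<epsilon>^2 * sqrt (V l * Cost l) / s0) / W \<epsilon>"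
      by (rule divide_right_mono[OF VN_lb[OF e(1)]]) (use W_pos[of \<epsilon>] in auto)
    also have "\<dots> \<le> (\<epsilon>^2 * sqrt (V l * Cost l) / s0) / (k * \<epsilon>^2)"
    proof (rule divide_left_mono[OF W_lb[OF e]])
      show "0 \<le> \<epsilon>^2 * sqrt (V l * Cost l) / s0" using VC_nn[of l] s0_pos by simp
      show "0 < W \<epsilon> * (k * \<epsilon>^2)" using W_pos[of \<epsilon>] k_pos e by simp
    qed
    also have "\<dots> = sqrt (V l * Cost l) / (s0 * k)" using e by simp
    also have "\<dots> \<le> bnd l / (s0 * k)"
      by (rule divide_right_mono[OF sqrtVC]) (use s0_pos k_pos in auto)
    finally show ?thesis .
  qed
  define p where "p = \<beta> / (\<beta> + \<gamma>)"
  have p01: "0 \<le> p" "p \<le> 1" unfolding p_def using pos by auto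
  define A1 where "A1 = C' / (s0^2 * k)"
  define B1 where "B1 = C / k"
  have A1_pos: "A1 > 0" unfolding A1_def using Cp s0_pos k_pos by simp
  have B1_pos: "B1 > 0" unfolding B1_def using pos k_pos by simp
  define K0 where "K0 = p * ln A1 + (1 - p) * ln B1"
  define qq where "qq = 4 * p - 2"
  have qq_pos: "qq > 0" unfolding qq_def p_def using pos beta_gt_gamma by (simp add: field_simps)
  define R where "R \<epsilon> = exp K0 * \<epsilon> powr qq" for \<epsilon> :: real
  have R_nn: "R \<epsilon> \<ge> 0" for \<epsilon> unfolding R_def by simp
  have R_lim: "(R \<longlongrightarrow> 0) (at_right 0)"
  proof -
    have "((\<lambda>\<epsilon>::real. \<epsilon> powr qq) \<longlongrightarrow> 0) (at_right 0)"
      by (rule tendsto_zero_powrI) (auto intro: tendsto_ident_at eventually_at_rightI[of 0 1] simp: qq_pos)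
    then show ?thesis unfolding R_def by (rule tendsto_mult_right_zero)
  qed
  have ratio2: "V l / ((real (N \<epsilon> l))^2 * W \<epsilon>) \<le> R \<epsilon>" if e: "0 < \<epsilon>" "\<epsilon> \<le> 1" for \<epsilon> l
  proof (cases "V l = 0")
    case True then show ?thesis using R_nn by simp
  next
    case False
    then have Vp: "V l > 0" using V_nn[of l] by simp
    have Wp: "W \<epsilon> > 0" by (rule W_pos)
    have ke: "k * \<epsilon>^2 > 0" using k_pos e by simp
    define x where "x = V l / ((real (N \<epsilon> l))^2 * W \<epsilon>)"
    have xa: "x \<le> A1 * (\<epsilon> * \<epsilon>) * exp (\<gamma> * real l)"
    proof -
      have "x = (V l / real (N \<epsilon> l))^2 / V l / W \<epsilon>"
        unfolding x_def using Vp by (simp add: power2_eq_square field_simps)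
      also have "\<dots> \<le> (\<epsilon>^2 * sqrt (V l * Cost l) / s0)^2 / V l / W \<epsilon>"
        using VN_lb[OF e(1), of l] Vp Wp N_ge1[of \<epsilon> l]
        by (intro divide_right_mono power_mono) auto
      also have "(\<epsilon>^2 * sqrt (V l * Cost l) / s0)^2 / V l = \<epsilon>^4 * Cost l / s0^2"
        using Vp VC_nn[of l] by (simp add: power_mult_distrib power_divide)
      also have "\<epsilon>^4 * Cost l / s0^2 / W \<epsilon> \<le> \<epsilon>^4 * (C' * exp (\<gamma> * real l)) / s0^2 / W \<epsilon>"
        using cost(2)[of l] Wp s0_pos by (intro divide_right_mono mult_left_mono) auto
      also have "\<dots> \<le> \<epsilon>^4 * (C' * exp (\<gamma> * real l)) / s0^2 / (k * \<epsilon>^2)"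
        using Cp s0_pos Wp ke W_lb[OF e] by (intro divide_left_mono) auto
      also have "\<dots> = A1 * (\<epsilon> * \<epsilon>) * exp (\<gamma> * real l)"
        unfolding A1_def using e k_pos s0_pos by (simp add: field_simps power2_eq_square eval_nat_numeral)
      finally show ?thesis .
    qed
    have xb: "x \<le> B1 / (\<epsilon> * \<epsilon>) * exp (- \<beta> * real l)"
    proof -
      have "x \<le> V l / W \<epsilon>"
        unfolding x_def using Vp Wp N_ge1[of \<epsilon> l]
        by (intro divide_left_mono) (auto simp: mult_le_cancel_right1 one_le_power)
      also have "\<dots> \<le> C * exp (- \<beta> * real l) / W \<epsilon>"
        using var_decay[of l] Wp by (intro divide_right_mono) auto
      also have "\<dots> \<le> C * exp (- \<beta> * real l) / (k * \<epsilon>^2)"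
        using pos Wp ke W_lb[OF e] by (intro divide_left_mono) auto
      also have "\<dots> = B1 / (\<epsilon> * \<epsilon>) * exp (- \<beta> * real l)"
        unfolding B1_def by (simp add: power2_eq_square)
      finally show ?thesis .
    qed
    define u where "u = ln A1 + (ln \<epsilon> + ln \<epsilon>) + \<gamma> * real l"
    define v where "v = ln B1 - (ln \<epsilon> + ln \<epsilon>) + - \<beta> * real l"
    have eu: "exp u = A1 * (\<epsilon> * \<epsilon>) * exp (\<gamma> * real l)"
      unfolding u_def by (simp only: exp_add exp_ln[OF A1_pos] exp_ln[OF e(1)])
    have ev: "exp v = B1 / (\<epsilon> * \<epsilon>) * exp (- \<beta> * real l)"
      unfolding v_def by (simp only: exp_add exp_diff exp_ln[OF B1_pos] exp_ln[OF e(1)])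
    have "x \<le> exp (min u v)" using xa xb eu ev by (simp add: min_def)
    also have "\<dots> \<le> exp (p * u + (1 - p) * v)" using min_le_convex[OF p01] by simp
    also have "p * u + (1 - p) * v = K0 + qq * ln \<epsilon> + (p * \<gamma> - (1 - p) * \<beta>) * real l"
      unfolding u_def v_def K0_def qq_def by (simp add: algebra_simps)
    also have "p * \<gamma> - (1 - p) * \<beta> = 0"
      unfolding p_def using pos by (simp add: field_simps)
    also have "exp (K0 + qq * ln \<epsilon> + 0 * real l) = R \<epsilon>"
      unfolding R_def powr_def using e by (simp add: exp_add mult.commute)
    finally show ?thesis unfolding x_def .
  qed
  define D where "D l \<omega> = dX Xs l \<omega> - \<mu> l" for l \<omega>
  have D_meas[measurable]: "D l \<in> borel_measurable M" for l unfolding D_def by simp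
  define g where "g l r = expectation (\<lambda>\<omega>. min (6 * (D l \<omega>)^2) (r * \<bar>D l \<omega>\<bar>^3))" for l r
  have g_int: "integrable M (\<lambda>\<omega>. min (6 * (D l \<omega>)^2) (r * \<bar>D l \<omega>\<bar>^3))" if "r \<ge> 0" for l r
  proof -
    have "integrable M (\<lambda>\<omega>. 6 * (D l \<omega>)^2)" using cen_sq[of l] unfolding D_def by simp
    then show ?thesis
      by (rule Bochner_Integration.integrable_bound) (use that in \<open>auto intro!: AE_I2\<close>)
  qed
  have g_nn: "g l r \<ge> 0" if "r \<ge> 0" for l r
    unfolding g_def using that by (intro integral_nonneg_AE AE_I2) auto
  have g_le: "g l r \<le> 6 * V l" if "r \<ge> 0" for l r
  proof -
    have "g l r \<le> expectation (\<lambda>\<omega>. 6 * (D l \<omega>)^2)"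
      unfolding g_def using g_int[OF that] cen_sq[of l] by (intro integral_mono) (auto simp: D_def)
    also have "\<dots> = 6 * V l" by (simp add: V_eq D_def)
    finally show ?thesis .
  qed
  have g_mono: "g l r \<le> g l r'" if "0 \<le> r" "r \<le> r'" for l r r'
  proof -
    have "r * \<bar>D l \<omega>\<bar>^3 \<le> r' * \<bar>D l \<omega>\<bar>^3" for \<omega> using that by (intro mult_right_mono) auto
    then have pt: "min (6 * (D l \<omega>)^2) (r * \<bar>D l \<omega>\<bar>^3) \<le> min (6 * (D l \<omega>)^2) (r' * \<bar>D l \<omega>\<bar>^3)" for \<omega>
      by (meson min.mono order_refl)
    show ?thesis unfolding g_def using that
      by (intro integral_mono g_int pt) auto
  qed
  have g_lim: "(g l \<longlongrightarrow> 0) (at_right 0)" for l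
  proof -
    have lim1: "((\<lambda>T. g l (inverse T)) \<longlongrightarrow> 0) at_top"
    proof -
      have "((\<lambda>T. integral\<^sup>L M (\<lambda>\<omega>. min (6 * (D l \<omega>)^2) (inverse T * \<bar>D l \<omega>\<bar>^3))) \<longlongrightarrow> integral\<^sup>L M (\<lambda>\<omega>. 0::real)) at_top"
      proof (rule integral_dominated_convergence_at_top[where w="\<lambda>\<omega>. 6 * (D l \<omega>)^2"])
        show "integrable M (\<lambda>\<omega>. 6 * (D l \<omega>)^2)" using cen_sq[of l] unfolding D_def by simp
        show "AE \<omega> in M. ((\<lambda>T. min (6 * (D l \<omega>)^2) (inverse T * \<bar>D l \<omega>\<bar>^3)) \<longlongrightarrow> 0) at_top"
        proof (rule AE_I2)
          fix \<omega>
          have "((\<lambda>T. min (6 * (D l \<omega>)^2) (inverse T * \<bar>D l \<omega>\<bar>^3)) \<longlongrightarrow> min (6 * (D l \<omega>)^2) (0 * \<bar>D l \<omega>\<bar>^3)) at_top"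
            by (intro tendsto_intros tendsto_inverse_0_at_top filterlim_ident)
          moreover have eq: "min (6 * (D l \<omega>)^2) (0 * \<bar>D l \<omega>\<bar>^3) = 0" by simp
          ultimately show "((\<lambda>T. min (6 * (D l \<omega>)^2) (inverse T * \<bar>D l \<omega>\<bar>^3)) \<longlongrightarrow> 0) at_top"
            by metis
        qed
        show "\<forall>\<^sub>F T in at_top. AE \<omega> in M. norm (min (6 * (D l \<omega>)^2) (inverse T * \<bar>D l \<omega>\<bar>^3)) \<le> 6 * (D l \<omega>)^2"
          by (rule eventually_at_top_linorderI[of 1]) (auto intro!: AE_I2)
      qed auto
      then show ?thesis unfolding g_def by simp
    qed
    have "((\<lambda>r. g l (inverse (inverse r))) \<longlongrightarrow> 0) (at_right 0)"
      by (rule filterlim_compose[OF lim1 filterlim_inverse_at_top_right])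
    then show ?thesis by simp
  qed
  define Lsum where "Lsum t \<epsilon> = (\<Sum>l\<le>L \<epsilon>. g l (\<bar>t\<bar> / (real (N \<epsilon> l) * sqrt (W \<epsilon>))) / (real (N \<epsilon> l) * W \<epsilon>))" for t \<epsilon>
  have ev01: "\<forall>\<^sub>F \<epsilon> in at_right (0::real). 0 < \<epsilon> \<and> \<epsilon> \<le> 1"
    by (rule eventually_at_rightI[of 0 1]) auto
  have Lsum_lim: "(Lsum t \<longlongrightarrow> 0) (at_right 0)" for t
  proof -
    define a where "a l \<epsilon> = (if l \<in> {..L \<epsilon>} then g l (\<bar>t\<bar> / (real (N \<epsilon> l) * sqrt (W \<epsilon>))) / (real (N \<epsilon> l) * W \<epsilon>) else 0)" for l \<epsilon>
    have r_nn: "0 \<le> \<bar>t\<bar> / (real (N \<epsilon> l) * sqrt (W \<epsilon>))" for \<epsilon> l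
      using N_ge1[of \<epsilon> l] W_pos[of \<epsilon>] by simp
    have a_abs: "\<bar>a l \<epsilon>\<bar> \<le> g l (\<bar>t\<bar> / (real (N \<epsilon> l) * sqrt (W \<epsilon>))) / (real (N \<epsilon> l) * W \<epsilon>)" for l \<epsilon>
      unfolding a_def using g_nn[OF r_nn] N_ge1[of \<epsilon> l] W_pos[of \<epsilon>] by auto
    have sums: "(\<lambda>l. a l \<epsilon>) sums Lsum t \<epsilon>" for \<epsilon>
      unfolding a_def Lsum_def atMost_def[symmetric] by (rule sums_If_finite_set) simp
    have bound: "\<forall>\<^sub>F (l, \<epsilon>) in at_top \<times>\<^sub>F at_right 0. norm (a l \<epsilon>) \<le> 6 * bnd l / (s0 * k)"
    proof -
      have "\<forall>\<^sub>F \<epsilon> in at_right (0::real). \<forall>l. norm (a l \<epsilon>) \<le> 6 * bnd l / (s0 * k)"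
        using ev01
      proof eventually_elim
        case (elim \<epsilon>)
        show ?case
        proof
          fix l
          have "norm (a l \<epsilon>) \<le> g l (\<bar>t\<bar> / (real (N \<epsilon> l) * sqrt (W \<epsilon>))) / (real (N \<epsilon> l) * W \<epsilon>)"
            using a_abs by simp
          also have "\<dots> \<le> 6 * V l / (real (N \<epsilon> l) * W \<epsilon>)"
            using g_le[OF r_nn] N_ge1[of \<epsilon> l] W_pos[of \<epsilon>] by (intro divide_right_mono) auto
          also have "\<dots> = 6 * (V l / (real (N \<epsilon> l) * W \<epsilon>))" by simp
          also have "\<dots> \<le> 6 * (bnd l / (s0 * k))" using ratio1[of \<epsilon> l] elim by simp
          finally show "norm (a l \<epsilon>) \<le> 6 * bnd l / (s0 * k)" by simp
        qed
      qed
      then have "\<forall>\<^sub>F x in at_top \<times>\<^sub>F at_right 0. (\<lambda>_. True) (fst x) \<and> (\<lambda>\<epsilon>. \<forall>l. norm (a l \<epsilon>) \<le> 6 * bnd l / (s0 * k)) (snd x)"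
        by (intro eventually_prodI) auto
      then show ?thesis by (rule eventually_mono) (auto simp: case_prod_beta)
    qed
    have lim: "((\<lambda>\<epsilon>. a l \<epsilon>) \<longlongrightarrow> 0) (at_right 0)" for l
    proof (cases "V l = 0")
      case True
      have "a l \<epsilon> = 0" for \<epsilon>
      proof -
        have "g l (\<bar>t\<bar> / (real (N \<epsilon> l) * sqrt (W \<epsilon>))) = 0"
          using g_le[OF r_nn, of l \<epsilon> l] g_nn[OF r_nn, of l \<epsilon> l] True by simp
        then show ?thesis using a_abs[of l \<epsilon>] by simp
      qed
      then show ?thesis by simp
    next
      case False
      then have Vp: "V l > 0" using V_nn[of l] by simp
      define cl where "cl = \<bar>t\<bar> / (sqrt (V l / Cost l) * s0 * sqrt k) + 1"
      have cl_pos: "cl > 0" unfolding cl_def using Vp Cost_pos[of l] s0_pos k_pos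
        by (intro add_nonneg_pos divide_nonneg_pos) auto
      define Kl where "Kl = bnd l / (s0 * k * V l)"
      have bnd2: "\<forall>\<^sub>F \<epsilon> in at_right (0::real). norm (a l \<epsilon>) \<le> g l (cl * \<epsilon>) * Kl"
        using ev01
      proof eventually_elim
        case (elim \<epsilon>)
        then have e: "0 < \<epsilon>" "\<epsilon> \<le> 1" by auto
        have Np: "real (N \<epsilon> l) > 0" using N_ge1[of \<epsilon> l] by simp
        have Wp: "W \<epsilon> > 0" by (rule W_pos)
        have rb: "\<bar>t\<bar> / (real (N \<epsilon> l) * sqrt (W \<epsilon>)) \<le> cl * \<epsilon>"
        proof -
          have q1: "(1 / \<epsilon>^2) * sqrt (V l / Cost l) * s0 \<le> real (N \<epsilon> l)"
          proof (rule order_trans[OF _ N_lb])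
            have "0 \<le> (1 / \<epsilon>^2) * sqrt (V l / Cost l)" using Vp Cost_pos[of l] by simp
            then show "(1 / \<epsilon>^2) * sqrt (V l / Cost l) * s0 \<le> (1 / \<epsilon>^2) * sqrt (V l / Cost l) * S \<epsilon>"
              by (rule mult_left_mono[OF S_lb])
          qed
          have q2: "sqrt k * \<epsilon> \<le> sqrt (W \<epsilon>)"
            using real_sqrt_le_mono[OF W_lb[OF e]] e k_pos by (simp add: real_sqrt_mult)
          have q3: "((1 / \<epsilon>^2) * sqrt (V l / Cost l) * s0) * (sqrt k * \<epsilon>) \<le> real (N \<epsilon> l) * sqrt (W \<epsilon>)"
            using q1 q2 e k_pos s0_pos Vp Cost_pos[of l] by (intro mult_mono) auto
          have q4: "((1 / \<epsilon>^2) * sqrt (V l / Cost l) * s0) * (sqrt k * \<epsilon>) = (sqrt (V l / Cost l) * s0 * sqrt k) / \<epsilon>"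
            using e by (simp add: power2_eq_square field_simps)
          have pp: "sqrt (V l / Cost l) * s0 * sqrt k > 0" using Vp Cost_pos[of l] s0_pos k_pos by simp
          have "\<bar>t\<bar> / (real (N \<epsilon> l) * sqrt (W \<epsilon>)) \<le> \<bar>t\<bar> / ((sqrt (V l / Cost l) * s0 * sqrt k) / \<epsilon>)"
          proof (rule divide_left_mono)
            show "sqrt (V l / Cost l) * s0 * sqrt k / \<epsilon> \<le> real (N \<epsilon> l) * sqrt (W \<epsilon>)" using q3 q4 by simp
            show "0 < real (N \<epsilon> l) * sqrt (W \<epsilon>) * (sqrt (V l / Cost l) * s0 * sqrt k / \<epsilon>)"
              using Np Wp pp e by simp
          qed simp
          also have "\<dots> = \<bar>t\<bar> / (sqrt (V l / Cost l) * s0 * sqrt k) * \<epsilon>" using e by simp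
          also have "\<dots> \<le> cl * \<epsilon>" unfolding cl_def using e by (simp add: distrib_right)
          finally show ?thesis .
        qed
        have "norm (a l \<epsilon>) \<le> g l (\<bar>t\<bar> / (real (N \<epsilon> l) * sqrt (W \<epsilon>))) / (real (N \<epsilon> l) * W \<epsilon>)"
          using a_abs by simp
        also have "\<dots> \<le> g l (cl * \<epsilon>) / (real (N \<epsilon> l) * W \<epsilon>)"
          using g_mono[OF r_nn rb] Np Wp by (intro divide_right_mono) auto
        also have "\<dots> = g l (cl * \<epsilon>) * (1 / (real (N \<epsilon> l) * W \<epsilon>))" by simp
        also have "\<dots> \<le> g l (cl * \<epsilon>) * Kl"
        proof (rule mult_left_mono)
          show "0 \<le> g l (cl * \<epsilon>)" using cl_pos e by (intro g_nn) simp
          have "V l / (real (N \<epsilon> l) * W \<epsilon>) \<le> bnd l / (s0 * k)" by (rule ratio1[OF e])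
          then have "V l / (real (N \<epsilon> l) * W \<epsilon>) / V l \<le> bnd l / (s0 * k) / V l"
            using Vp by (intro divide_right_mono) auto
          moreover have "V l / (real (N \<epsilon> l) * W \<epsilon>) / V l = 1 / (real (N \<epsilon> l) * W \<epsilon>)" using Vp by simp
          moreover have "bnd l / (s0 * k) / V l = Kl" unfolding Kl_def by simp
          ultimately show "1 / (real (N \<epsilon> l) * W \<epsilon>) \<le> Kl" by simp
        qed
        finally show ?case .
      qed
      have "filterlim (\<lambda>\<epsilon>. cl * \<epsilon>) (at_right 0) (at_right (0::real))"
        unfolding filterlim_at
      proof
        show "\<forall>\<^sub>F \<epsilon> in at_right 0. cl * \<epsilon> \<in> {0<..} \<and> cl * \<epsilon> \<noteq> 0"
          using ev01 by eventually_elim (use cl_pos in auto)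
        show "((\<lambda>\<epsilon>. cl * \<epsilon>) \<longlongrightarrow> 0) (at_right 0)"
          by (rule tendsto_mult_right_zero) (rule tendsto_ident_at)
      qed
      then have "((\<lambda>\<epsilon>. g l (cl * \<epsilon>)) \<longlongrightarrow> 0) (at_right 0)"
        by (rule filterlim_compose[OF g_lim])
      then have "((\<lambda>\<epsilon>. g l (cl * \<epsilon>) * Kl) \<longlongrightarrow> 0) (at_right 0)"
        by (rule tendsto_mult_left_zero)
      then show ?thesis by (rule Lim_null_comparison[OF bnd2])
    qed
    have summ: "summable (\<lambda>l. 6 * bnd l / (s0 * k))"
      using summable_mult[OF bnd_summable, of 6] by (intro summable_divide) simp
    have "((\<lambda>\<epsilon>. suminf (\<lambda>l. a l \<epsilon>)) \<longlongrightarrow> suminf (\<lambda>l. 0::real)) (at_right 0)"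
      using tannerys_theorem[OF lim bound summ] by simp
    moreover have "suminf (\<lambda>l. a l \<epsilon>) = Lsum t \<epsilon>" for \<epsilon> using sums[of \<epsilon>] by (rule sums_unique[symmetric])
    ultimately show ?thesis by simp
  qed
  have sumU: "(\<Sum>k\<in>J \<epsilon>. expectation (\<lambda>\<omega>. (U \<epsilon> k \<omega>)^2)) = W \<epsilon>" for \<epsilon>
  proof -
    have "(\<Sum>k\<in>J \<epsilon>. expectation (\<lambda>\<omega>. (U \<epsilon> k \<omega>)^2)) = (\<Sum>(l,i)\<in>J \<epsilon>. V l / (real (N \<epsilon> l))^2)"
      by (intro sum.cong refl) (auto simp: U_var)
    also have "\<dots> = W \<epsilon>" unfolding sumJ W_def
      by (intro sum.cong refl) (simp add: power2_eq_square)
    finally show ?thesis .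
  qed
  have Lev_eq: "Lev c\<^sub>\<alpha> \<alpha> \<epsilon> = L \<epsilon>" for \<epsilon> by (simp add: L_def)
  have Msz_eq: "Msz V Cost c\<^sub>\<alpha> \<alpha> \<epsilon> l = N \<epsilon> l" for \<epsilon> l by (simp add: N_def)
  have part2: "((\<lambda>\<epsilon>. Max ((\<lambda>l. V l / (real (Msz V Cost c\<^sub>\<alpha> \<alpha> \<epsilon> l) ^ 2
                      * Var M (AML Y V Cost c\<^sub>\<alpha> \<alpha> \<epsilon>))) ` {0..Lev c\<^sub>\<alpha> \<alpha> \<epsilon>}))
           \<longlongrightarrow> 0) (at_right 0)"
    unfolding Lev_eq Msz_eq Var_eq
  proof (rule tendsto_sandwich[of "\<lambda>_. 0" _ _ R])
    show "\<forall>\<^sub>F \<epsilon> in at_right 0. 0 \<le> Max ((\<lambda>l. V l / ((real (N \<epsilon> l))^2 * W \<epsilon>)) ` {0..L \<epsilon>})"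
    proof (rule always_eventually, rule allI)
      fix \<epsilon> :: real
      have "0 \<le> V 0 / ((real (N \<epsilon> 0))^2 * W \<epsilon>)" using V_nn[of 0] W_pos[of \<epsilon>] by simp
      then show "0 \<le> Max ((\<lambda>l. V l / ((real (N \<epsilon> l))^2 * W \<epsilon>)) ` {0..L \<epsilon>})"
        by (subst Max_ge_iff) auto
    qed
    show "\<forall>\<^sub>F \<epsilon> in at_right 0. Max ((\<lambda>l. V l / ((real (N \<epsilon> l))^2 * W \<epsilon>)) ` {0..L \<epsilon>}) \<le> R \<epsilon>"
      using ev01 by eventually_elim (use ratio2 in auto)
  qed (auto intro: R_lim)
  have part1: "((\<lambda>\<epsilon>. measure M {\<omega> \<in> space M.
               (AML Y V Cost c\<^sub>\<alpha> \<alpha> \<epsilon> \<omega> - (\<integral>\<eta>. Xs (Lev c\<^sub>\<alpha> \<alpha> \<epsilon>) \<eta> \<partial>M))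
                 / sqrt (Var M (AML Y V Cost c\<^sub>\<alpha> \<alpha> \<epsilon>)) \<le> x}) \<longlongrightarrow> Phi x) (at_right 0)" for x
  proof -
    define Z where "Z \<epsilon> k \<omega> = U \<epsilon> k \<omega> / sqrt (W \<epsilon>)" for \<epsilon> k \<omega>
    have F_eq: "measure M {\<omega> \<in> space M.
               (AML Y V Cost c\<^sub>\<alpha> \<alpha> \<epsilon> \<omega> - (\<integral>\<eta>. Xs (Lev c\<^sub>\<alpha> \<alpha> \<epsilon>) \<eta> \<partial>M))
                 / sqrt (Var M (AML Y V Cost c\<^sub>\<alpha> \<alpha> \<epsilon>)) \<le> x}
         = cdf (distr M borel (\<lambda>\<omega>. \<Sum>k\<in>J \<epsilon>. Z \<epsilon> k \<omega>)) x" for \<epsilon>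
    proof -
      have "{\<omega> \<in> space M. (AML Y V Cost c\<^sub>\<alpha> \<alpha> \<epsilon> \<omega> - (\<integral>\<eta>. Xs (Lev c\<^sub>\<alpha> \<alpha> \<epsilon>) \<eta> \<partial>M))
                 / sqrt (Var M (AML Y V Cost c\<^sub>\<alpha> \<alpha> \<epsilon>)) \<le> x}
          = (\<lambda>\<omega>. \<Sum>k\<in>J \<epsilon>. Z \<epsilon> k \<omega>) -` {..x} \<inter> space M"
        unfolding Lev_eq Var_eq mean_decomp cen_eq Z_def by (auto simp: sum_divide_distrib)
      moreover have "measure (distr M borel (\<lambda>\<omega>. \<Sum>k\<in>J \<epsilon>. Z \<epsilon> k \<omega>)) {..x} = measure M ((\<lambda>\<omega>. \<Sum>k\<in>J \<epsilon>. Z \<epsilon> k \<omega>) -` {..x} \<inter> space M)"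
        by (rule measure_distr) (auto simp: Z_def)
      ultimately show ?thesis by (simp add: cdf_def)
    qed
    have Z_indep: "indep_vars (\<lambda>_. borel) (Z \<epsilon>) (J \<epsilon>)" for \<epsilon>
    proof -
      have "indep_vars (\<lambda>_. borel) (\<lambda>k \<omega>. (\<lambda>y. y / sqrt (W \<epsilon>)) (U \<epsilon> k \<omega>)) (J \<epsilon>)"
        by (rule indep_vars_compose2[OF U_indep]) auto
      then show ?thesis unfolding Z_def .
    qed
    have Z_sq: "integrable M (\<lambda>\<omega>. (Z \<epsilon> k \<omega>)^2)" for \<epsilon> k
      unfolding Z_def using U_sq[of \<epsilon> k] by (simp add: power_divide)
    have Z_mean: "expectation (Z \<epsilon> k) = 0" for \<epsilon> k
      unfolding Z_def using U_mean[of \<epsilon> k] by simp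
    have Z_var: "expectation (\<lambda>\<omega>. (Z \<epsilon> k \<omega>)^2) = expectation (\<lambda>\<omega>. (U \<epsilon> k \<omega>)^2) / W \<epsilon>" for \<epsilon> k
      unfolding Z_def using W_pos[of \<epsilon>] by (simp add: power_divide)
    have Z_sumvar: "(\<Sum>k\<in>J \<epsilon>. expectation (\<lambda>\<omega>. (Z \<epsilon> k \<omega>)^2)) = 1" for \<epsilon>
      using sumU[of \<epsilon>] W_pos[of \<epsilon>] by (simp add: Z_var sum_divide_distrib[symmetric])
    have Z_lind: "(\<Sum>k\<in>J \<epsilon>. expectation (\<lambda>\<omega>. min (6 * (Z \<epsilon> k \<omega>)^2) (\<bar>t\<bar> * \<bar>Z \<epsilon> k \<omega>\<bar>^3))) = Lsum t \<epsilon>" for \<epsilon> t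
    proof -
      have one: "expectation (\<lambda>\<omega>. min (6 * (Z \<epsilon> (l,i) \<omega>)^2) (\<bar>t\<bar> * \<bar>Z \<epsilon> (l,i) \<omega>\<bar>^3))
          = g l (\<bar>t\<bar> / (real (N \<epsilon> l) * sqrt (W \<epsilon>))) / (real (N \<epsilon> l) * sqrt (W \<epsilon>))^2" for l i
      proof -
        define c where "c = real (N \<epsilon> l) * sqrt (W \<epsilon>)"
        have cp: "c > 0" unfolding c_def using N_ge1[of \<epsilon> l] W_pos[of \<epsilon>] by simp
        have Zc: "Z \<epsilon> (l,i) \<omega> = (Y l i \<omega> - \<mu> l) / c" for \<omega>
          unfolding Z_def U_def c_def by simp
        have "expectation (\<lambda>\<omega>. min (6 * (Z \<epsilon> (l,i) \<omega>)^2) (\<bar>t\<bar> * \<bar>Z \<epsilon> (l,i) \<omega>\<bar>^3))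
            = expectation (\<lambda>\<omega>. min (6 * ((dX Xs l \<omega> - \<mu> l) / c)^2) (\<bar>t\<bar> * \<bar>(dX Xs l \<omega> - \<mu> l) / c\<bar>^3))"
          unfolding Zc by (subst law_int[of "\<lambda>y. min (6 * ((y - \<mu> l) / c)^2) (\<bar>t\<bar> * \<bar>(y - \<mu> l) / c\<bar>^3)"]) auto
        also have "\<dots> = expectation (\<lambda>\<omega>. min (6 * (D l \<omega>)^2) ((\<bar>t\<bar> / c) * \<bar>D l \<omega>\<bar>^3) / c^2)"
          unfolding D_def using min_scale[OF cp] by simp
        also have "\<dots> = g l (\<bar>t\<bar> / c) / c^2" unfolding g_def by simp
        finally show ?thesis unfolding c_def .
      qed
      have "(\<Sum>k\<in>J \<epsilon>. expectation (\<lambda>\<omega>. min (6 * (Z \<epsilon> k \<omega>)^2) (\<bar>t\<bar> * \<bar>Z \<epsilon> k \<omega>\<bar>^3)))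
          = (\<Sum>(l,i)\<in>J \<epsilon>. g l (\<bar>t\<bar> / (real (N \<epsilon> l) * sqrt (W \<epsilon>))) / (real (N \<epsilon> l) * sqrt (W \<epsilon>))^2)"
        by (intro sum.cong refl) (auto simp: one)
      also have "\<dots> = Lsum t \<epsilon>" unfolding sumJ Lsum_def
      proof (intro sum.cong refl)
        fix l
        have "(real (N \<epsilon> l) * sqrt (W \<epsilon>))^2 = real (N \<epsilon> l) * (real (N \<epsilon> l) * W \<epsilon>)"
          using W_pos[of \<epsilon>] by (simp add: power_mult_distrib power2_eq_square)
        then show "real (N \<epsilon> l) * (g l (\<bar>t\<bar> / (real (N \<epsilon> l) * sqrt (W \<epsilon>))) / (real (N \<epsilon> l) * sqrt (W \<epsilon>))^2)
            = g l (\<bar>t\<bar> / (real (N \<epsilon> l) * sqrt (W \<epsilon>))) / (real (N \<epsilon> l) * W \<epsilon>)"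
          using N_ge1[of \<epsilon> l] by simp
      qed
      finally show ?thesis .
    qed
    have Z_small: "(\<Sum>k\<in>J \<epsilon>. (expectation (\<lambda>\<omega>. (Z \<epsilon> k \<omega>)^2))^2) \<le> R \<epsilon>" if e: "0 < \<epsilon>" "\<epsilon> \<le> 1" for \<epsilon>
    proof -
      define r where "r l = V l / ((real (N \<epsilon> l))^2 * W \<epsilon>)" for l
      have r_nn: "r l \<ge> 0" for l unfolding r_def using V_nn[of l] W_pos[of \<epsilon>] by simp
      have "(\<Sum>k\<in>J \<epsilon>. (expectation (\<lambda>\<omega>. (Z \<epsilon> k \<omega>)^2))^2) = (\<Sum>(l,i)\<in>J \<epsilon>. (r l)^2)"
        by (intro sum.cong refl) (auto simp: Z_var U_var r_def)
      also have "\<dots> = (\<Sum>l\<le>L \<epsilon>. real (N \<epsilon> l) * (r l)^2)" by (rule sumJ)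
      also have "\<dots> \<le> (\<Sum>l\<le>L \<epsilon>. R \<epsilon> * (real (N \<epsilon> l) * r l))"
      proof (rule sum_mono)
        fix l
        have "r l * r l \<le> R \<epsilon> * r l" using ratio2[OF e, of l] r_nn[of l] unfolding r_def[symmetric]
          by (intro mult_right_mono) auto
        then have k1: "r l * r l * real (N \<epsilon> l) \<le> R \<epsilon> * r l * real (N \<epsilon> l)"
          by (rule mult_right_mono) simp
        have k2: "real (N \<epsilon> l) * (r l)^2 = r l * r l * real (N \<epsilon> l)" by (simp add: power2_eq_square)
        have k3: "R \<epsilon> * (real (N \<epsilon> l) * r l) = R \<epsilon> * r l * real (N \<epsilon> l)" by simp
        show "real (N \<epsilon> l) * (r l)^2 \<le> R \<epsilon> * (real (N \<epsilon> l) * r l)" unfolding k2 k3 by (rule k1)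
      qed
      also have "\<dots> = R \<epsilon> * (\<Sum>l\<le>L \<epsilon>. V l / real (N \<epsilon> l)) / W \<epsilon>"
      proof -
        have "real (N \<epsilon> l) * r l = V l / real (N \<epsilon> l) / W \<epsilon>" for l
          unfolding r_def using N_ge1[of \<epsilon> l] by (simp add: power2_eq_square)
        then show ?thesis by (simp add: sum_distrib_left sum_divide_distrib)
      qed
      also have "\<dots> = R \<epsilon>" using W_pos[of \<epsilon>] unfolding W_def by simp
      finally show ?thesis .
    qed
    have cdfPhi: "cdf std_normal_distribution x = Phi x" by (simp add: cdf_def Phi_def)
    have isC: "isCont (cdf std_normal_distribution) x"
    proof -
      have "{x} \<in> null_sets std_normal_distribution"
      proof -
        have "AE y in lborel. y \<noteq> x" by (rule AE_lborel_singleton)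
        then have "AE y in lborel. y \<in> {x} \<longrightarrow> ennreal (std_normal_density y) = 0"
          by eventually_elim auto
        then show ?thesis by (subst null_sets_density_iff) auto
      qed
      then have m0: "measure std_normal_distribution {x} = 0" by (rule measure_eq_0_null_sets)
      interpret Nd: real_distribution std_normal_distribution by (rule real_dist_normal_dist)
      show ?thesis using m0 by (simp add: Nd.isCont_cdf)
    qed
    show ?thesis unfolding tendsto_at_iff_sequentially
    proof (intro allI impI)
      fix e :: "nat \<Rightarrow> real"
      assume e1: "\<forall>i. e i \<in> {0<..} - {0}" and e2: "e \<longlonglongrightarrow> 0"
      have fl: "filterlim e (at_right 0) sequentially"
        unfolding filterlim_at using e1 e2 by (auto intro!: always_eventually) (metis less_irrefl)
      have wc: "weak_conv_m (\<lambda>n. distr M borel (\<lambda>\<omega>. \<Sum>k\<in>J (e n). Z (e n) k \<omega>)) std_normal_distribution"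
      proof (rule clt_triangular)
        show "finite (J (e n))" for n by (rule J_fin)
        show "indep_vars (\<lambda>_. borel) (Z (e n)) (J (e n))" for n by (rule Z_indep)
        show "integrable M (\<lambda>\<omega>. (Z (e n) k \<omega>)^2)" for n k by (rule Z_sq)
        show "expectation (Z (e n) k) = 0" for n k by (rule Z_mean)
        show "(\<Sum>k\<in>J (e n). expectation (\<lambda>\<omega>. (Z (e n) k \<omega>)^2)) = 1" for n by (rule Z_sumvar)
        show "(\<lambda>n. \<Sum>k\<in>J (e n). expectation (\<lambda>\<omega>. min (6 * (Z (e n) k \<omega>)^2) (\<bar>t\<bar> * \<bar>Z (e n) k \<omega>\<bar>^3))) \<longlonglongrightarrow> 0" for t
          unfolding Z_lind by (rule filterlim_compose[OF Lsum_lim fl])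
        have Rl: "(\<lambda>n. R (e n)) \<longlonglongrightarrow> 0" by (rule filterlim_compose[OF R_lim fl])
        have ev: "\<forall>\<^sub>F n in sequentially. 0 < e n \<and> e n \<le> 1"
          by (rule filterlim_iff[THEN iffD1, OF fl, rule_format, OF ev01])
        show "(\<lambda>n. \<Sum>k\<in>J (e n). (expectation (\<lambda>\<omega>. (Z (e n) k \<omega>)^2))^2) \<longlonglongrightarrow> 0"
        proof (rule Lim_null_comparison[OF _ Rl])
          show "\<forall>\<^sub>F n in sequentially. norm (\<Sum>k\<in>J (e n). (expectation (\<lambda>\<omega>. (Z (e n) k \<omega>)^2))^2) \<le> R (e n)"
            using ev by eventually_elim (use Z_small in \<open>auto simp: abs_of_nonneg sum_nonneg\<close>)
        qed
      qed
      then have "(\<lambda>n. cdf (distr M borel (\<lambda>\<omega>. \<Sum>k\<in>J (e n). Z (e n) k \<omega>)) x) \<longlonglongrightarrow> cdf std_normal_distribution x"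
        using isC unfolding weak_conv_m_def weak_conv_def by blast
      then show "((\<lambda>\<epsilon>. measure M {\<omega> \<in> space M.
               (AML Y V Cost c\<^sub>\<alpha> \<alpha> \<epsilon> \<omega> - (\<integral>\<eta>. Xs (Lev c\<^sub>\<alpha> \<alpha> \<epsilon>) \<eta> \<partial>M))
                 / sqrt (Var M (AML Y V Cost c\<^sub>\<alpha> \<alpha> \<epsilon>)) \<le> x}) \<circ> e) \<longlonglongrightarrow> Phi x"
        unfolding comp_def F_eq cdfPhi .
    qed
  qed
  show ?thesis using part1 part2 by blast
qed

end
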